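(* Let $n\ge4$ and $\mathcal G\in\mathbb G^n_S$, with orthogonal decomposition $\mathcal G=\mathcal G_{cpi}+\mathcal G_{cyclic}$. Then $\mathcal G_{cpi}$ has edge weights $\omega_j+\omega_k$ where $$\omega_j=\frac1{n-2}\Big[S_S(V_j)-\tfrac12T(\mathcal G)\Big],\qquad j=1,\dots,n,$$ and $T(\mathcal G)=T(\mathcal G_{cpi})=2\sum_{j=1}^n\omega_j$. Moreover, the length in $\mathcal G$ of every Hamiltonian circuit equals $T(\mathcal G)$ plus its length in $\mathcal G_{cyclic}=\mathcal G-\mathcal G_{cpi}$.
   Context: $\mathbb G^n_S$ is the space of complete undirected weighted graphs without loops on $V_1,\dots,V_n$ with edge weights $d_{i,j}=d_{j,i}$, identified with $\mathbb R^{\binom n2}$ with the standard inner product. $\mathbb{CPI}^n_S$ is the subspace of graphs with $d_{j,k}=\omega_j+\omega_k$ for some reals $\omega_j$; $\mathbb C^n_S$ is its orthogonal complement; $\mathcal G_{cpi},\mathcal G_{cyclic}$ are the orthogonal projections of $\mathcal G$ onto these. $S_S(V_j)=\sum_{k\ne j}d_{j,k}$ and $T(\mathcal G)=\frac1{n-1}\sum_{j=1}^nS_S(V_j)$. A Hamiltonian circuit is a closed path visiting every vertex exactly once; its length is the sum of its edge weights. *)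

theory Defs
  imports Complex_Main
begin

(* Vertices V_1..V_n are represented by 0..<n.  A graph in G^n_S is a symmetric
   weight function d :: nat => nat => real which vanishes on the diagonal and
   outside {0..<n} (canonical representative of an element of R^(n choose 2)). *)

definition graphs :: "nat \<Rightarrow> (nat \<Rightarrow> nat \<Rightarrow> real) set" where
  "graphs n = {d. (\<forall>j k. d j k = d k j) \<and>
                  (\<forall>j k. d j k \<noteq> 0 \<longrightarrow> j \<noteq> k \<and> j < n \<and> k < n)}"

definition ginner :: "nat \<Rightarrow> (nat \<Rightarrow> nat \<Rightarrow> real) \<Rightarrow> (nat \<Rightarrow> nat \<Rightarrow> real) \<Rightarrow> real" where
  "ginner n d e = (\<Sum>(j,k)\<in>{(j,k). j < k \<and> k < n}. d j k * e j k)"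

definition CPI :: "nat \<Rightarrow> (nat \<Rightarrow> nat \<Rightarrow> real) set" where
  "CPI n = {d \<in> graphs n. \<exists>\<omega>::nat \<Rightarrow> real.
              \<forall>j k. j < n \<longrightarrow> k < n \<longrightarrow> j \<noteq> k \<longrightarrow> d j k = \<omega> j + \<omega> k}"

definition cpi_part :: "nat \<Rightarrow> (nat \<Rightarrow> nat \<Rightarrow> real) \<Rightarrow> (nat \<Rightarrow> nat \<Rightarrow> real)" where
  "cpi_part n d = (THE c. c \<in> CPI n \<and> (\<forall>e \<in> CPI n. ginner n (d - c) e = 0))"

definition cyclic_part :: "nat \<Rightarrow> (nat \<Rightarrow> nat \<Rightarrow> real) \<Rightarrow> (nat \<Rightarrow> nat \<Rightarrow> real)" where
  "cyclic_part n d = d - cpi_part n d"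

definition S_S :: "nat \<Rightarrow> (nat \<Rightarrow> nat \<Rightarrow> real) \<Rightarrow> nat \<Rightarrow> real" where
  "S_S n d j = (\<Sum>k\<in>{0..<n} - {j}. d j k)"

definition T_G :: "nat \<Rightarrow> (nat \<Rightarrow> nat \<Rightarrow> real) \<Rightarrow> real" where
  "T_G n d = (1 / (real n - 1)) * (\<Sum>j<n. S_S n d j)"

(* a Hamiltonian circuit on V_1..V_n, given by the cyclic order of its vertices *)
definition ham_circuit :: "nat \<Rightarrow> nat list \<Rightarrow> bool" where
  "ham_circuit n p \<longleftrightarrow> distinct p \<and> set p = {0..<n}"

definition circuit_length :: "nat \<Rightarrow> (nat \<Rightarrow> nat \<Rightarrow> real) \<Rightarrow> nat list \<Rightarrow> real" where
  "circuit_length n d p = (\<Sum>i<n. d (p ! i) (p ! ((i + 1) mod n)))"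

end

theory Submission
  imports Defs
begin

lemma pair_sum_half:
  fixes f :: "nat \<Rightarrow> nat \<Rightarrow> real"
  assumes sym: "\<And>j k. f j k = f k j" and diag: "\<And>j. f j j = 0"
  shows "(\<Sum>(j,k)\<in>{(j,k). j < k \<and> k < n}. f j k) = (1/2) * (\<Sum>j<n. \<Sum>k<n. f j k)"
proof (induction n)
  case 0
  then show ?case by simp
next
  case (Suc n)
  have set: "{(j,k). j < k \<and> k < Suc n} = {(j,k). j < k \<and> k < n} \<union> (\<lambda>j. (j,n)) ` {..<n}"
    by auto
  have fin: "finite {(j,k). j < k \<and> k < n}"
    by (rule finite_subset[of _ "{..<n} \<times> {..<n}"]) auto
  have disj: "{(j,k). j < k \<and> k < n} \<inter> (\<lambda>j. (j,n)) ` {..<n} = {}" by auto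
  have "(\<Sum>(j,k)\<in>{(j,k). j < k \<and> k < Suc n}. f j k)
      = (\<Sum>(j,k)\<in>{(j,k). j < k \<and> k < n}. f j k) + (\<Sum>(j,k)\<in>(\<lambda>j. (j,n)) ` {..<n}. f j k)"
    unfolding set by (rule sum.union_disjoint[OF fin _ disj]) auto
  also have "(\<Sum>(j,k)\<in>(\<lambda>j. (j,n)) ` {..<n}. f j k) = (\<Sum>j<n. f j n)"
    by (subst sum.reindex) (auto simp: inj_on_def)
  finally have A: "(\<Sum>(j,k)\<in>{(j,k). j < k \<and> k < Suc n}. f j k)
      = (1/2) * (\<Sum>j<n. \<Sum>k<n. f j k) + (\<Sum>j<n. f j n)" using Suc by simp
  have "(\<Sum>j<Suc n. \<Sum>k<Suc n. f j k) = (\<Sum>j<n. \<Sum>k<n. f j k) + (\<Sum>j<n. f j n) + (\<Sum>k<n. f n k) + f n n"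
    by (simp add: sum.distrib)
  also have "(\<Sum>k<n. f n k) = (\<Sum>j<n. f j n)" using sym by simp
  finally show ?case using A diag by simp
qed

lemma ginner_diff:
  "ginner n (a - b) e = ginner n a e - ginner n b e"
  unfolding ginner_def by (simp add: sum_subtractf[symmetric] case_prod_beta algebra_simps)

lemma ginner_diff2:
  "ginner n (d - b) e - ginner n (d - a) e = ginner n (a - b) e"
  by (simp add: ginner_diff)

lemma cpi_diff:
  assumes "a \<in> CPI n" "b \<in> CPI n" shows "a - b \<in> CPI n"
proof -
  from assms obtain wa wb where wa: "\<forall>j k. j < n \<longrightarrow> k < n \<longrightarrow> j \<noteq> k \<longrightarrow> a j k = wa j + wa k"
    and wb: "\<forall>j k. j < n \<longrightarrow> k < n \<longrightarrow> j \<noteq> k \<longrightarrow> b j k = wb j + wb k"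
    unfolding CPI_def by blast
  have ga: "a \<in> graphs n" and gb: "b \<in> graphs n" using assms unfolding CPI_def by auto
  have s1: "\<forall>j k. (a - b) j k = (a - b) k j" using ga gb unfolding graphs_def by simp
  have s2: "\<forall>j k. (a - b) j k \<noteq> 0 \<longrightarrow> j \<noteq> k \<and> j < n \<and> k < n"
  proof (intro allI impI)
    fix j k
    assume h: "(a - b) j k \<noteq> 0"
    then have "a j k \<noteq> 0 \<or> b j k \<noteq> 0" by auto
    then show "j \<noteq> k \<and> j < n \<and> k < n" using ga gb unfolding graphs_def by blast
  qed
  have "a - b \<in> graphs n" unfolding graphs_def using s1 s2 by blast
  moreover have "\<forall>j k. j < n \<longrightarrow> k < n \<longrightarrow> j \<noteq> k \<longrightarrow> (a - b) j k = (wa - wb) j + (wa - wb) k"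
    using wa wb by simp
  ultimately show ?thesis unfolding CPI_def by blast
qed

lemma cpi_unique:
  assumes c1: "c1 \<in> CPI n" "\<forall>e\<in>CPI n. ginner n (d - c1) e = 0"
    and c2: "c2 \<in> CPI n" "\<forall>e\<in>CPI n. ginner n (d - c2) e = 0"
  shows "c1 = c2"
proof -
  have m: "c1 - c2 \<in> CPI n" by (rule cpi_diff[OF c1(1) c2(1)])
  have "ginner n (c1 - c2) (c1 - c2) = 0"
    using ginner_diff2[of n d c2 "c1 - c2" c1] c1(2) c2(2) m by simp
  hence "(\<Sum>(j,k)\<in>{(j,k). j < k \<and> k < n}. (c1 j k - c2 j k)^2) = 0"
    unfolding ginner_def by (simp add: power2_eq_square)
  moreover have fin: "finite {(j,k). j < k \<and> k < n}"
    by (rule finite_subset[of _ "{..<n} \<times> {..<n}"]) auto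
  ultimately have z: "\<And>j k. j < k \<Longrightarrow> k < n \<Longrightarrow> c1 j k = c2 j k"
    using sum_nonneg_eq_0_iff[OF fin, of "\<lambda>(j,k). (c1 j k - c2 j k)^2"]
    by auto
  have g1: "c1 \<in> graphs n" and g2: "c2 \<in> graphs n" using c1 c2 unfolding CPI_def by auto
  show ?thesis
  proof (intro ext)
    fix j k
    show "c1 j k = c2 j k"
    proof (cases "j < n \<and> k < n \<and> j \<noteq> k")
      case True
      then show ?thesis
      proof (cases "j < k")
        case True then show ?thesis using z \<open>j < n \<and> k < n \<and> j \<noteq> k\<close> by auto
      next
        case False
        then have "c1 k j = c2 k j" using z \<open>j < n \<and> k < n \<and> j \<noteq> k\<close> by auto
        moreover have "c1 j k = c1 k j" "c2 j k = c2 k j" using g1 g2 unfolding graphs_def by auto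
        ultimately show ?thesis by simp
      qed
    next
      case False
      then have "c1 j k = 0" "c2 j k = 0" using g1 g2 unfolding graphs_def by blast+
      then show ?thesis by simp
    qed
  qed
qed

theorem theorem12:
  fixes n :: nat and d :: "nat \<Rightarrow> nat \<Rightarrow> real"
  assumes "n \<ge> 4" and "d \<in> graphs n"
  defines "\<omega> \<equiv> \<lambda>j. (1 / (real n - 2)) * (S_S n d j - T_G n d / 2)"
  shows "(\<forall>j k. j < n \<longrightarrow> k < n \<longrightarrow> j \<noteq> k \<longrightarrow> cpi_part n d j k = \<omega> j + \<omega> k)
         \<and> T_G n d = T_G n (cpi_part n d)
         \<and> T_G n (cpi_part n d) = 2 * (\<Sum>j<n. \<omega> j)
         \<and> (\<forall>p. ham_circuit n p \<longrightarrow>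
               circuit_length n d p = T_G n d + circuit_length n (cyclic_part n d) p)"
proof -
  define T where "T = T_G n d"
  define S where "S = S_S n d"
  have n2: "real n - 2 > 0" using assms(1) by simp
  have n1: "real n - 1 \<noteq> 0" using assms(1) by simp
  have sumS: "(\<Sum>j<n. S j) = (real n - 1) * T"
    unfolding T_def S_def T_G_def using n1 by simp
  have sumw: "(\<Sum>j<n. \<omega> j) = T / 2"
  proof -
    have "(\<Sum>j<n. \<omega> j) = (1 / (real n - 2)) * ((\<Sum>j<n. S j) - real n * (T/2))"
      unfolding \<omega>_def S_def T_def by (simp add: sum_divide_distrib[symmetric] sum_subtractf)
    also have "\<dots> = T/2" using sumS n2 by (simp add: field_simps)
    finally show ?thesis .
  qed
  define c where "c = (\<lambda>j k. if j < n \<and> k < n \<and> j \<noteq> k then \<omega> j + \<omega> k else 0)"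
  have Sc: "S_S n c j = S j" if "j < n" for j
  proof -
    have "S_S n c j = (\<Sum>k\<in>{0..<n} - {j}. \<omega> j + \<omega> k)"
      unfolding S_S_def c_def using that by (intro sum.cong) auto
    also have "\<dots> = (real n - 1) * \<omega> j + ((\<Sum>k<n. \<omega> k) - \<omega> j)"
      using that by (simp add: sum.distrib sum_diff1 lessThan_atLeast0 of_nat_diff)
    also have "\<dots> = (real n - 2) * \<omega> j + T/2" using sumw by (simp add: algebra_simps)
    also have "\<dots> = S j" using n2 unfolding \<omega>_def T_def S_def by (simp add: field_simps)
    finally show ?thesis .
  qed
  have dsym: "\<And>j k. d j k = d k j" and dsup: "\<And>j k. d j k \<noteq> 0 \<Longrightarrow> j \<noteq> k \<and> j < n \<and> k < n"
    using assms(2) unfolding graphs_def by auto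
  have cC: "c \<in> CPI n"
    unfolding CPI_def graphs_def c_def by auto
  have orth: "\<forall>e\<in>CPI n. ginner n (d - c) e = 0"
  proof
    fix e assume e: "e \<in> CPI n"
    then obtain a where a: "\<forall>j k. j < n \<longrightarrow> k < n \<longrightarrow> j \<noteq> k \<longrightarrow> e j k = a j + a k"
      and eg: "e \<in> graphs n" unfolding CPI_def by blast
    define x where "x = d - c"
    have xs: "\<And>j k. x j k = x k j" unfolding x_def c_def using dsym by (auto simp: add.commute)
    have xd: "\<And>j. x j j = 0" unfolding x_def c_def using dsup by auto
    have es: "\<And>j k. e j k = e k j" using eg unfolding graphs_def by auto
    have rows: "(\<Sum>k<n. x j k) = 0" if "j < n" for j
    proof -
      have "(\<Sum>k<n. x j k) = (\<Sum>k\<in>{0..<n} - {j}. x j k)"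
        using that xd by (simp add: lessThan_atLeast0 sum_diff1)
      also have "\<dots> = S_S n d j - S_S n c j" unfolding x_def S_S_def
        by (simp add: sum_subtractf)
      finally show ?thesis using Sc[OF that] S_def by simp
    qed
    have "ginner n (d - c) e = (1/2) * (\<Sum>j<n. \<Sum>k<n. x j k * e j k)"
      unfolding ginner_def x_def[symmetric]
      by (rule pair_sum_half) (auto simp: xs es xd)
    also have "(\<Sum>j<n. \<Sum>k<n. x j k * e j k) = (\<Sum>j<n. \<Sum>k<n. x j k * a j + x j k * a k)"
    proof (intro sum.cong refl)
      fix j k assume "j \<in> {..<n}" "k \<in> {..<n}"
      then show "x j k * e j k = x j k * a j + x j k * a k"
        by (cases "j = k") (auto simp: a xd distrib_left)
    qed
    also have "\<dots> = (\<Sum>j<n. a j * (\<Sum>k<n. x j k)) + (\<Sum>j<n. \<Sum>k<n. x j k * a k)"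
      by (simp add: sum.distrib sum_distrib_left mult.commute)
    also have "(\<Sum>j<n. \<Sum>k<n. x j k * a k) = (\<Sum>k<n. a k * (\<Sum>j<n. x k j))"
      by (subst sum.swap) (simp add: sum_distrib_left xs mult.commute)
    finally show "ginner n (d - c) e = 0" using rows by (simp add: fun_diff_def)
  qed
  have cp: "cpi_part n d = c"
    unfolding cpi_part_def
  proof (rule the_equality)
    show "c \<in> CPI n \<and> (\<forall>e\<in>CPI n. ginner n (d - c) e = 0)" using cC orth by blast
  next
    fix c' assume h: "c' \<in> CPI n \<and> (\<forall>e\<in>CPI n. ginner n (d - c') e = 0)"
    show "c' = c" using cpi_unique[OF conjunct1[OF h] conjunct2[OF h] cC orth] .
  qed
  have P1: "\<forall>j k. j < n \<longrightarrow> k < n \<longrightarrow> j \<noteq> k \<longrightarrow> cpi_part n d j k = \<omega> j + \<omega> k"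
    unfolding cp c_def by auto
  have P2: "T_G n d = T_G n (cpi_part n d)"
    unfolding cp T_G_def using Sc S_def by simp
  have P3: "T_G n (cpi_part n d) = 2 * (\<Sum>j<n. \<omega> j)"
    using P2 sumw T_def by simp
  have P4: "circuit_length n d p = T_G n d + circuit_length n (cyclic_part n d) p"
    if hp: "ham_circuit n p" for p
  proof -
    have dp: "distinct p" and sp: "set p = {0..<n}" using hp unfolding ham_circuit_def by auto
    have lp: "length p = n" using distinct_card[OF dp] sp by simp
    have bij: "bij_betw ((!) p) {..<n} {..<n}"
      by (rule bij_betw_nth[OF dp]) (auto simp: lp sp lessThan_atLeast0)
    have s1: "(\<Sum>i<n. \<omega> (p ! i)) = (\<Sum>j<n. \<omega> j)"
      using sum.reindex_bij_betw[OF bij, of \<omega>] by simp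
    have shift: "(\<Sum>i<n. g ((i + 1) mod n)) = (\<Sum>i<n. g i)" for g :: "nat \<Rightarrow> real"
    proof -
      obtain m where m: "n = Suc m" using assms(1) by (cases n) auto
      have "(\<Sum>i<Suc m. g ((i + 1) mod Suc m)) = (\<Sum>i<m. g ((i + 1) mod Suc m)) + g 0"
        by simp
      also have "(\<Sum>i<m. g ((i + 1) mod Suc m)) = (\<Sum>i<m. g (Suc i))"
        by (intro sum.cong) auto
      also have "\<dots> + g 0 = (\<Sum>i<Suc m. g i)"
        unfolding sum.lessThan_Suc_shift by simp
      finally show ?thesis using m by simp
    qed
    have "circuit_length n d p - circuit_length n (cyclic_part n d) p
        = (\<Sum>i<n. c (p ! i) (p ! ((i + 1) mod n)))"
      unfolding circuit_length_def cyclic_part_def cp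
      by (simp add: sum_subtractf[symmetric])
    also have "\<dots> = (\<Sum>i<n. \<omega> (p ! i) + \<omega> (p ! ((i + 1) mod n)))"
    proof (intro sum.cong refl)
      fix i assume i: "i \<in> {..<n}"
      have i1: "(i + 1) mod n < n" using assms(1) by simp
      have ne: "i \<noteq> (i + 1) mod n"
      proof
        assume h: "i = (i + 1) mod n"
        show False
        proof (cases "i + 1 < n")
          case True then show False using h by simp
        next
          case False then have "i + 1 = n" using i by simp
          then show False using h assms(1) by simp
        qed
      qed
      have "p ! i \<noteq> p ! ((i + 1) mod n)"
        using nth_eq_iff_index_eq[OF dp] i i1 ne lp by auto
      moreover have "p ! i < n" "p ! ((i + 1) mod n) < n"
        using nth_mem[of i p] nth_mem[of "(i+1) mod n" p] i i1 lp sp by auto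
      ultimately show "c (p ! i) (p ! ((i + 1) mod n)) = \<omega> (p ! i) + \<omega> (p ! ((i + 1) mod n))"
        unfolding c_def by simp
    qed
    also have "\<dots> = 2 * (\<Sum>j<n. \<omega> j)"
      using s1 shift[of "\<lambda>i. \<omega> (p ! i)"] by (simp add: sum.distrib)
    finally show ?thesis using sumw T_def by simp
  qed
  show ?thesis using P1 P2 P3 P4 by blast
qed

end
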